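(* Let $p\ge1$ and $s_1,\dots,s_p\in\mathbb{C}$. For all $m,l\in\mathbb{Z}_{\ge0}$, $(\Delta^l\mathtt{c}_{s_1,\dots,s_p})(m)=\mathtt{c}_{s_1,\dots,s_p;\,1-s_1,\dots,1-s_p}(m,l)$.
   Context: Convention $0^0=1$. $\mathtt{c}_{s_1,\dots,s_p}(m)=\sum_{m=m_1\ge\cdots\ge m_p\ge0}\frac{s_1^{m_1-m_2}\cdots s_{p-1}^{m_{p-1}-m_p}}{(m_1+1)\cdots(m_{p-1}+1)}s_p^{m_p}$. For $t_1,\dots,t_p\in\mathbb{C}$, $\mathtt{c}_{s_1,\dots,s_p;t_1,\dots,t_p}(m,l)=\binom{m+l}{m}^{-1}\sum_{m=m_1\ge\cdots\ge m_p\ge0,\ l=l_1\ge\cdots\ge l_p\ge0}\Bigl[\prod_{i=1}^{p-1}\binom{m_i-m_{i+1}+l_i-l_{i+1}}{m_i-m_{i+1}}\frac{s_i^{m_i-m_{i+1}}t_i^{l_i-l_{i+1}}}{m_i+l_i+1}\Bigr]\binom{m_p+l_p}{m_p}s_p^{m_p}t_p^{l_p}$. The difference operator is $(\Delta a)(m)=a(m)-a(m+1)$. *)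

theory Defs
  imports Complex_Main
begin

text \<open>Chains m = m_1 \<ge> m_2 \<ge> ... \<ge> m_p \<ge> 0, as lists of length p (0-based indices).\<close>
definition chains :: "nat \<Rightarrow> nat \<Rightarrow> nat list set" where
  "chains p m = {ms. length ms = p \<and> ms ! 0 = m \<and> sorted_wrt (\<ge>) ms}"

text \<open>c_{s_1,...,s_p}(m); s is the list [s_1,...,s_p]. Note 0^0 = 1 in Isabelle.\<close>
definition cfun :: "complex list \<Rightarrow> nat \<Rightarrow> complex" where
  "cfun s m = (let p = length s in
     \<Sum>ms\<in>chains p m.
       (\<Prod>i<p - 1. s ! i ^ (ms ! i - ms ! (i+1)) / of_nat (ms ! i + 1))
       * s ! (p - 1) ^ (ms ! (p - 1)))"

definition cfun2 :: "complex list \<Rightarrow> complex list \<Rightarrow> nat \<Rightarrow> nat \<Rightarrow> complex" where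
  "cfun2 s t m l = (let p = length s in
     inverse (of_nat ((m + l) choose m)) *
     (\<Sum>ms\<in>chains p m. \<Sum>ls\<in>chains p l.
       (\<Prod>i<p - 1.
          of_nat ((ms ! i - ms ! (i+1) + (ls ! i - ls ! (i+1))) choose (ms ! i - ms ! (i+1)))
          * s ! i ^ (ms ! i - ms ! (i+1)) * t ! i ^ (ls ! i - ls ! (i+1))
          / of_nat (ms ! i + ls ! i + 1))
       * of_nat ((ms ! (p - 1) + ls ! (p - 1)) choose (ms ! (p - 1)))
       * s ! (p - 1) ^ (ms ! (p - 1)) * t ! (p - 1) ^ (ls ! (p - 1))))"

definition Delta :: "(nat \<Rightarrow> complex) \<Rightarrow> nat \<Rightarrow> complex" where
  "Delta a m = a m - a (m + 1)"

end

theory Submission imports Defs begin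

lemma sorted_le_hd: "sorted_wrt (\<ge>) (ms::nat list) \<Longrightarrow> ms \<noteq> [] \<Longrightarrow> x \<in> set ms \<Longrightarrow> x \<le> ms ! 0"
  by (cases ms) auto

lemma chains_fin: "finite (chains p m)"
proof -
  have "chains p m \<subseteq> {xs. set xs \<subseteq> {..m} \<and> length xs = p}"
    using sorted_le_hd unfolding chains_def by fastforce
  moreover have "finite {xs. set xs \<subseteq> {..m} \<and> length xs = p}"
    by (rule finite_lists_length_eq) simp
  ultimately show ?thesis by (rule finite_subset)
qed

lemma chains_Suc_eq:
  assumes "p \<ge> 1"
  shows "chains (Suc p) m = (#) m ` (\<Union>j\<le>m. chains p j)"
proof
  show "chains (Suc p) m \<subseteq> (#) m ` (\<Union>j\<le>m. chains p j)"
  proof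
    fix ms assume "ms \<in> chains (Suc p) m"
    then obtain a rest where ms: "ms = a # rest" and "length rest = p" "a = m"
      "sorted_wrt (\<ge>) (a#rest)"
      unfolding chains_def by (cases ms) auto
    then have "rest \<noteq> []" using assms by auto
    then have "rest ! 0 \<le> m" using \<open>sorted_wrt (\<ge>) (a#rest)\<close> \<open>a = m\<close>
      by (cases rest) auto
    moreover have "rest \<in> chains p (rest ! 0)" unfolding chains_def
      using \<open>length rest = p\<close> \<open>sorted_wrt (\<ge>) (a#rest)\<close> by auto
    ultimately show "ms \<in> (#) m ` (\<Union>j\<le>m. chains p j)" using ms \<open>a = m\<close> by blast
  qed
next
  show "(#) m ` (\<Union>j\<le>m. chains p j) \<subseteq> chains (Suc p) m"
  proof clarify
    fix j ms assume "j \<le> m" "ms \<in> chains p j"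
    then have "length ms = p" "ms ! 0 = j" "sorted_wrt (\<ge>) ms" unfolding chains_def by auto
    moreover have "ms \<noteq> []" using assms \<open>length ms = p\<close> by auto
    ultimately have "\<forall>x\<in>set ms. x \<le> m" using sorted_le_hd \<open>j \<le> m\<close> by fastforce
    then show "m # ms \<in> chains (Suc p) m" unfolding chains_def
      using \<open>length ms = p\<close> \<open>sorted_wrt (\<ge>) ms\<close> by auto
  qed
qed

lemma chains_Suc_sum:
  assumes "p \<ge> 1"
  shows "(\<Sum>ms\<in>chains (Suc p) m. g ms) = (\<Sum>j\<le>m. \<Sum>ms\<in>chains p j. g (m#ms))"
proof -
  have "(\<Sum>ms\<in>chains (Suc p) m. g ms) = (\<Sum>ms\<in>(\<Union>j\<le>m. chains p j). g (m#ms))"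
    by (simp add: chains_Suc_eq[OF assms] sum.reindex inj_on_def)
  also have "\<dots> = (\<Sum>j\<le>m. \<Sum>ms\<in>chains p j. g (m#ms))"
    by (rule sum.UNION_disjoint) (auto simp: chains_fin, auto simp: chains_def)
  finally show ?thesis .
qed

lemma chains_one: "chains 1 m = {[m]}"
  unfolding chains_def by (auto simp: length_Suc_conv)

lemma cfun_single: "cfun [x] m = x ^ m"
  by (simp add: cfun_def chains_one[simplified])

lemma cfun_Cons:
  assumes "s' \<noteq> []"
  shows "cfun (x#s') m = (\<Sum>j\<le>m. x^(m-j) / of_nat (m+1) * cfun s' j)"
proof -
  obtain q where q: "length s' = Suc q" using assms by (cases s') auto
  have "cfun (x#s') m = (\<Sum>j\<le>m. \<Sum>ms\<in>chains (Suc q) j.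
       (\<Prod>i<Suc q. (x#s') ! i ^ ((m#ms) ! i - (m#ms) ! (i+1)) / of_nat ((m#ms) ! i + 1))
       * (x#s') ! (Suc q) ^ ((m#ms) ! (Suc q)))"
    unfolding cfun_def Let_def using q by (simp add: chains_Suc_sum)
  also have "\<dots> = (\<Sum>j\<le>m. x^(m-j) / of_nat (m+1) * cfun s' j)"
  proof (rule sum.cong[OF refl])
    fix j assume "j \<in> {..m}"
    show "(\<Sum>ms\<in>chains (Suc q) j.
       (\<Prod>i<Suc q. (x#s') ! i ^ ((m#ms) ! i - (m#ms) ! (i+1)) / of_nat ((m#ms) ! i + 1))
       * (x#s') ! (Suc q) ^ ((m#ms) ! (Suc q))) = x^(m-j) / of_nat (m+1) * cfun s' j"
      unfolding cfun_def Let_def q sum_distrib_left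
    proof (rule sum.cong[OF refl])
      fix ms assume "ms \<in> chains (Suc q) j"
      then have "ms ! 0 = j" by (simp add: chains_def)
      then show "(\<Prod>i<Suc q. (x#s') ! i ^ ((m#ms) ! i - (m#ms) ! (i+1)) / of_nat ((m#ms) ! i + 1))
       * (x#s') ! (Suc q) ^ ((m#ms) ! (Suc q)) =
         x^(m-j) / of_nat (m+1) * ((\<Prod>i<Suc q - 1. s' ! i ^ (ms ! i - ms ! (i+1)) / of_nat (ms ! i + 1))
       * s' ! (Suc q - 1) ^ (ms ! (Suc q - 1)))"
        by (simp only: prod.lessThan_Suc_shift) (simp add: field_simps)
    qed
  qed
  finally show ?thesis .
qed

definition W :: "complex list \<Rightarrow> complex list \<Rightarrow> nat \<Rightarrow> nat \<Rightarrow> complex" where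
  "W s t m l = of_nat ((m+l) choose m) * cfun2 s t m l"

definition K :: "complex \<Rightarrow> complex \<Rightarrow> nat \<Rightarrow> nat \<Rightarrow> complex" where
  "K x y a b = of_nat ((a+b) choose a) * x^a * y^b"

lemma choose_nz: "(of_nat ((m+l) choose m) :: complex) \<noteq> 0"
  by simp

lemma W_single: "W [x] [y] m l = K x y m l"
  by (simp add: W_def K_def cfun2_def chains_one[simplified])

definition T2 :: "complex list \<Rightarrow> complex list \<Rightarrow> nat list \<Rightarrow> nat list \<Rightarrow> complex" where
  "T2 s t ms ls = (let p = length s in (\<Prod>i<p - 1.
          of_nat ((ms ! i - ms ! (i+1) + (ls ! i - ls ! (i+1))) choose (ms ! i - ms ! (i+1)))
          * s ! i ^ (ms ! i - ms ! (i+1)) * t ! i ^ (ls ! i - ls ! (i+1))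
          / of_nat (ms ! i + ls ! i + 1))
       * of_nat ((ms ! (p - 1) + ls ! (p - 1)) choose (ms ! (p - 1)))
       * s ! (p - 1) ^ (ms ! (p - 1)) * t ! (p - 1) ^ (ls ! (p - 1)))"

lemma W_T2: "W s t m l = (\<Sum>ms\<in>chains (length s) m. \<Sum>ls\<in>chains (length s) l. T2 s t ms ls)"
  unfolding W_def cfun2_def T2_def Let_def using choose_nz[of m l] by simp

lemma T2_Cons:
  assumes "length s' = Suc q" "ms \<in> chains (Suc q) j" "ls \<in> chains (Suc q) k"
  shows "T2 (x#s') (y#t') (m#ms) (l#ls) = K x y (m-j) (l-k) / of_nat (m+l+1) * T2 s' t' ms ls"
proof -
  have "ms ! 0 = j" "ls ! 0 = k" using assms by (auto simp: chains_def)
  then show ?thesis using assms(1)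
    unfolding T2_def Let_def by (simp only: prod.lessThan_Suc_shift length_Cons diff_Suc_1) (simp add: K_def field_simps)
qed

lemma W_Cons:
  assumes "s' \<noteq> []"
  shows "W (x#s') (y#t') m l = (\<Sum>j\<le>m. \<Sum>k\<le>l. K x y (m-j) (l-k) * W s' t' j k) / of_nat (m+l+1)"
proof -
  obtain q where q: "length s' = Suc q" using assms by (cases s') auto
  have "W (x#s') (y#t') m l = (\<Sum>j\<le>m. \<Sum>ms\<in>chains (Suc q) j. \<Sum>k\<le>l. \<Sum>ls\<in>chains (Suc q) k.
           T2 (x#s') (y#t') (m#ms) (l#ls))"
    unfolding W_T2 using q by (simp add: chains_Suc_sum)
  also have "\<dots> = (\<Sum>j\<le>m. \<Sum>ms\<in>chains (Suc q) j. \<Sum>k\<le>l. \<Sum>ls\<in>chains (Suc q) k.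
           K x y (m-j) (l-k) / of_nat (m+l+1) * T2 s' t' ms ls)"
    by (intro sum.cong refl T2_Cons[OF q]) auto
  also have "\<dots> = (\<Sum>j\<le>m. \<Sum>k\<le>l. \<Sum>ms\<in>chains (Suc q) j. \<Sum>ls\<in>chains (Suc q) k.
           K x y (m-j) (l-k) / of_nat (m+l+1) * T2 s' t' ms ls)"
    by (intro sum.cong refl sum.swap)
  also have "\<dots> = (\<Sum>j\<le>m. \<Sum>k\<le>l. K x y (m-j) (l-k) / of_nat (m+l+1) * W s' t' j k)"
    unfolding W_T2 q by (simp add: sum_distrib_left)
  finally show ?thesis by (simp add: sum_divide_distrib)
qed

lemma L1:
  fixes P :: "nat \<Rightarrow> nat \<Rightarrow> complex"
  shows "of_nat (Suc m) * (\<Sum>j\<le>Suc m. P (Suc m - j) j) =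
    (\<Sum>j\<le>m. of_nat (m-j+1) * P (m-j+1) j) + (\<Sum>j\<le>m. of_nat (j+1) * P (m-j) (j+1))"
proof -
  have "of_nat (Suc m) * (\<Sum>j\<le>Suc m. P (Suc m - j) j) =
     (\<Sum>j\<le>Suc m. (of_nat (Suc m - j) + of_nat j) * P (Suc m - j) j)"
  proof -
    have "of_nat (Suc m - j) + of_nat j = (of_nat (Suc m)::complex)" if "j \<le> Suc m" for j
      using that by (metis le_add_diff_inverse2 of_nat_add)
    then show ?thesis unfolding sum_distrib_left by (intro sum.cong refl) (metis atMost_iff)
  qed
  also have "\<dots> = (\<Sum>j\<le>Suc m. of_nat (Suc m - j) * P (Suc m - j) j) + (\<Sum>j\<le>Suc m. of_nat j * P (Suc m - j) j)"
    by (simp only: distrib_right sum.distrib)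
  also have "(\<Sum>j\<le>Suc m. of_nat (Suc m - j) * P (Suc m - j) j) = (\<Sum>j\<le>m. of_nat (m-j+1) * P (m-j+1) j)"
    by (simp add: sum.atMost_Suc Suc_diff_le algebra_simps)
  also have "(\<Sum>j\<le>Suc m. of_nat j * P (Suc m - j) j) = (\<Sum>j\<le>m. of_nat (j+1) * P (m-j) (j+1))"
    by (simp only: sum.atMost_Suc_shift) simp
  finally show ?thesis .
qed

definition conv :: "(nat \<Rightarrow> nat \<Rightarrow> complex) \<Rightarrow> (nat \<Rightarrow> nat \<Rightarrow> complex) \<Rightarrow> nat \<Rightarrow> nat \<Rightarrow> complex" where
  "conv A B m l = (\<Sum>j\<le>m. \<Sum>k\<le>l. A (m-j) (l-k) * B j k)"

lemma convx: "of_nat (m+1) * conv A B (Suc m) l =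
   conv (\<lambda>a b. of_nat (a+1) * A (a+1) b) B m l + conv A (\<lambda>j k. of_nat (j+1) * B (j+1) k) m l"
proof -
  define P where "P a j = (\<Sum>k\<le>l. A a (l-k) * B j k)" for a j
  have "conv A B (Suc m) l = (\<Sum>j\<le>Suc m. P (Suc m - j) j)" by (simp add: conv_def P_def)
  then have "of_nat (m+1) * conv A B (Suc m) l =
    (\<Sum>j\<le>m. of_nat (m-j+1) * P (m-j+1) j) + (\<Sum>j\<le>m. of_nat (j+1) * P (m-j) (j+1))"
    using L1[of m P] by simp
  also have "\<dots> = conv (\<lambda>a b. of_nat (a+1) * A (a+1) b) B m l + conv A (\<lambda>j k. of_nat (j+1) * B (j+1) k) m l"
    by (simp add: conv_def P_def sum_distrib_left mult.assoc mult.left_commute)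
  finally show ?thesis .
qed

lemma conv_swap: "conv A B m l = conv (\<lambda>a b. A b a) (\<lambda>j k. B k j) l m"
  unfolding conv_def by (rule sum.swap)

lemma convy: "of_nat (l+1) * conv A B m (Suc l) =
   conv (\<lambda>a b. of_nat (b+1) * A a (b+1)) B m l + conv A (\<lambda>j k. of_nat (k+1) * B j (k+1)) m l"
proof -
  have "of_nat (l+1) * conv A B m (Suc l) = of_nat (l+1) * conv (\<lambda>a b. A b a) (\<lambda>j k. B k j) (Suc l) m"
    by (simp only: conv_swap[of A B m])
  also have "\<dots> = conv (\<lambda>a b. of_nat (a+1) * A b (a+1)) (\<lambda>j k. B k j) l m + conv (\<lambda>a b. A b a) (\<lambda>j k. of_nat (j+1) * B k (j+1)) l m"
    by (rule convx)
  also have "\<dots> = conv (\<lambda>a b. of_nat (b+1) * A a (b+1)) B m l + conv A (\<lambda>j k. of_nat (k+1) * B j (k+1)) m l"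
    by (simp only: conv_swap[of _ _ l m])
  finally show ?thesis .
qed

lemma conv_add1: "conv (\<lambda>a b. A1 a b + A2 a b) B m l = conv A1 B m l + conv A2 B m l"
  by (simp add: conv_def distrib_right sum.distrib)
lemma conv_add2: "conv A (\<lambda>a b. B1 a b + B2 a b) m l = conv A B1 m l + conv A B2 m l"
  by (simp add: conv_def distrib_left sum.distrib)

lemma K_rec: "x + y = 1 \<Longrightarrow>
  of_nat (a+1) * K x y (a+1) b + of_nat (b+1) * K x y a (b+1) = of_nat (a+b+1) * K x y a b"
proof -
  assume xy: "x + y = 1"
  have c1: "(a+1) * ((a+1+b) choose (a+1)) = (a+b+1) * ((a+b) choose a)"
    using Suc_times_binomial_eq[of "a+b" a] by simp
  have c2: "(b+1) * ((a+(b+1)) choose a) = (a+b+1) * ((a+b) choose a)"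
    using Suc_times_binomial_eq[of "a+b" b] binomial_symmetric[of a "a+b"] binomial_symmetric[of a "a+b+1"]
    by (simp add: add.commute add.left_commute)
  have "of_nat (a+1) * K x y (a+1) b + of_nat (b+1) * K x y a (b+1)
      = of_nat ((a+1) * ((a+1+b) choose (a+1))) * x^(a+1) * y^b
        + of_nat ((b+1) * ((a+(b+1)) choose a)) * x^a * y^(b+1)"
    unfolding K_def by (simp only: of_nat_mult) (simp add: algebra_simps)
  also have "\<dots> = of_nat ((a+b+1) * ((a+b) choose a)) * x^a * y^b * (x + y)"
    unfolding c1 c2 by (simp add: algebra_simps)
  also have "\<dots> = of_nat (a+b+1) * K x y a b" unfolding xy K_def by (simp only: of_nat_mult mult_1_right mult.assoc)
  finally show ?thesis .
qed

lemma c1: "(a+1) * ((a+1+b) choose (a+1)) = (a+b+1) * ((a+b) choose a)"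
  using Suc_times_binomial_eq[of "a+b" a] by simp
lemma c2: "(b+1) * ((a+(b+1)) choose a) = (a+b+1) * ((a+b) choose a)"
  using Suc_times_binomial_eq[of "a+b" b] binomial_symmetric[of a "a+b"] binomial_symmetric[of a "a+b+1"]
  by (simp add: add.commute add.left_commute)

lemma W_Cons_conv: "s' \<noteq> [] \<Longrightarrow> W (x#s') (y#t') m l = conv (K x y) (W s' t') m l / of_nat (m+l+1)"
  by (simp add: W_Cons conv_def)

lemma rec_main:
  assumes "s \<noteq> []"
  shows "of_nat (m+1) * W s (map (\<lambda>x. 1 - x) s) (Suc m) l + of_nat (l+1) * W s (map (\<lambda>x. 1 - x) s) m (Suc l)
        = of_nat (m+l+1) * W s (map (\<lambda>x. 1 - x) s) m l"
  using assms
proof (induction s arbitrary: m l)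
  case Nil then show ?case by simp
next
  case (Cons x s')
  define y where "y = 1 - x"
  have xy: "x + y = 1" by (simp add: y_def)
  show ?case
  proof (cases "s' = []")
    case True
    then show ?thesis using K_rec[OF xy, of m l] by (simp only: W_single list.map y_def[symmetric] Suc_eq_plus1)
  next
    case False
    define t' where "t' = map (\<lambda>x. 1 - x) s'"
    define W' where "W' = W s' t'"
    define H where "H = conv (K x y) W'"
    have IH: "of_nat (j+1) * W' (Suc j) k + of_nat (k+1) * W' j (Suc k) = of_nat (j+k+1) * W' j k" for j k
      using Cons.IH[OF False] unfolding W'_def t'_def by simp
    have eqW: "W (x#s') (map (\<lambda>x. 1 - x) (x#s')) a b = H a b / of_nat (a+b+1)" for a b
      using W_Cons_conv[OF False] by (simp add: H_def W'_def t'_def y_def)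
    have key: "of_nat (m+1) * H (Suc m) l + of_nat (l+1) * H m (Suc l) = of_nat (m+l+2) * H m l"
    proof -
      have "of_nat (m+1) * H (Suc m) l + of_nat (l+1) * H m (Suc l) =
        conv (\<lambda>a b. of_nat (a+1) * K x y (a+1) b + of_nat (b+1) * K x y a (b+1)) W' m l
        + conv (K x y) (\<lambda>j k. of_nat (j+1) * W' (Suc j) k + of_nat (k+1) * W' j (Suc k)) m l"
        unfolding H_def Suc_eq_plus1 convx[unfolded Suc_eq_plus1] convy[unfolded Suc_eq_plus1] conv_add1 conv_add2 by (simp only: add_ac)
      also have "\<dots> = conv (\<lambda>a b. of_nat (a+b+1) * K x y a b) W' m l
        + conv (K x y) (\<lambda>j k. of_nat (j+k+1) * W' j k) m l"
        by (simp only: K_rec[OF xy] IH)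
      also have "\<dots> = of_nat (m+l+2) * H m l"
        unfolding H_def conv_def sum_distrib_left sum.distrib[symmetric]
      proof (intro sum.cong refl)
        fix j k assume j: "j \<in> {..m}" and k: "k \<in> {..l}"
        have "m-j+(l-k)+1+(j+k+1) = m+l+2" using j k by simp
        then have E: "(of_nat (m-j+(l-k)+1) :: complex) + of_nat (j+k+1) = of_nat (m+l+2)"
          by (metis of_nat_add)
        have "of_nat (m - j + (l - k) + 1) * K x y (m - j) (l - k) * W' j k +
          K x y (m - j) (l - k) * (of_nat (j + k + 1) * W' j k) =
          ((of_nat (m-j+(l-k)+1) :: complex) + of_nat (j+k+1)) * (K x y (m - j) (l - k) * W' j k)"
          by (simp add: algebra_simps)
        then show "of_nat (m - j + (l - k) + 1) * K x y (m - j) (l - k) * W' j k +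
          K x y (m - j) (l - k) * (of_nat (j + k + 1) * W' j k) =
          of_nat (m + l + 2) * (K x y (m - j) (l - k) * W' j k)"
          by (simp only: E)
      qed
      finally show ?thesis .
    qed
    have nz1: "(of_nat (m+l+2) :: complex) \<noteq> 0" by (metis of_nat_eq_0_iff add_is_0 zero_neq_numeral)
    have nz2: "(of_nat (m+l+1) :: complex) \<noteq> 0" by (metis of_nat_eq_0_iff add_is_0 one_neq_zero)
    have "of_nat (m+1) * (H (Suc m) l / of_nat (Suc m + l + 1)) + of_nat (l+1) * (H m (Suc l) / of_nat (m + Suc l + 1))
       = (of_nat (m+1) * H (Suc m) l + of_nat (l+1) * H m (Suc l)) / of_nat (m+l+2)"
      by (simp add: add_divide_distrib add_ac)
    also have "\<dots> = H m l" using key nz1 by simp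
    also have "\<dots> = of_nat (m+l+1) * (H m l / of_nat (m+l+1))" using nz2 by simp
    finally show ?thesis unfolding eqW .
  qed
qed

lemma G0:
  assumes "s \<noteq> []"
  shows "cfun2 s (map (\<lambda>x. 1 - x) s) m 0 = cfun s m"
proof -
  have "W s (map (\<lambda>x. 1 - x) s) m 0 = cfun s m" using assms
  proof (induction s arbitrary: m)
    case Nil then show ?case by simp
  next
    case (Cons x s')
    show ?case
    proof (cases "s' = []")
      case True then show ?thesis by (simp add: W_single K_def cfun_single)
    next
      case False
      have "W (x#s') (map (\<lambda>x. 1 - x) (x#s')) m 0 =
         (\<Sum>j\<le>m. K x (1-x) (m-j) 0 * W s' (map (\<lambda>x. 1 - x) s') j 0) / of_nat (m+1)"
        using W_Cons[OF False, of x "1-x" "map (\<lambda>x. 1 - x) s'" m 0] by simp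
      also have "\<dots> = (\<Sum>j\<le>m. x^(m-j) / of_nat (m+1) * cfun s' j)"
        using Cons.IH[OF False] by (simp add: K_def sum_divide_distrib)
      finally show ?thesis using cfun_Cons[OF False] by simp
    qed
  qed
  then show ?thesis by (simp add: W_def)
qed

lemma G_rec:
  assumes "s \<noteq> []"
  defines "G \<equiv> cfun2 s (map (\<lambda>x. 1 - x) s)"
  shows "G m (Suc l) = G m l - G (Suc m) l"
proof -
  define c where "c = (of_nat ((m+l) choose m) :: complex)"
  have cnz: "c \<noteq> 0" by (simp add: c_def)
  have nz2: "(of_nat (m+l+1) :: complex) \<noteq> 0" by (metis of_nat_eq_0_iff add_is_0 one_neq_zero)
  have e1: "(of_nat (m+1) :: complex) * of_nat ((Suc m + l) choose (Suc m)) = of_nat (m+l+1) * c"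
    using c1[of m l] unfolding c_def by (metis Suc_eq_plus1 of_nat_mult)
  have e2: "(of_nat (l+1) :: complex) * of_nat ((m + Suc l) choose m) = of_nat (m+l+1) * c"
    using c2[of l m] unfolding c_def by (metis Suc_eq_plus1 of_nat_mult)
  have "of_nat (m+1) * (of_nat ((Suc m + l) choose (Suc m)) * G (Suc m) l)
      + of_nat (l+1) * (of_nat ((m + Suc l) choose m) * G m (Suc l)) = of_nat (m+l+1) * (c * G m l)"
    using rec_main[OF assms(1), of m l] unfolding W_def G_def c_def .
  then have "of_nat (m+l+1) * c * (G (Suc m) l + G m (Suc l)) = of_nat (m+l+1) * c * G m l"
    unfolding mult.assoc[symmetric] e1 e2 by (simp add: algebra_simps)
  then have "G (Suc m) l + G m (Suc l) = G m l" using cnz nz2 by simp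
  then show ?thesis by (simp add: algebra_simps)
qed

theorem proposition3p2:
  fixes s :: "complex list" and m l :: nat
  assumes "length s \<ge> 1"
  shows "(Delta ^^ l) (cfun s) m = cfun2 s (map (\<lambda>x. 1 - x) s) m l"
proof -
  have ne: "s \<noteq> []" using assms by auto
  show ?thesis
  proof (induction l arbitrary: m)
    case 0 then show ?case using G0[OF ne] by simp
  next
    case (Suc l)
    show ?case using Suc G_rec[OF ne, of m l] by (simp add: Delta_def)
  qed
qed
end
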